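(* For every ProbNetKAT program $p$, every $n\in\mathbb{N}$ and all $a,b,b'\subseteq\mathsf{Pk}$, \[ \sum_{a'\subseteq\mathsf{Pk}} [b'=a'\cup b]\cdot \mathcal{B}[\![p^{(n)}]\!]_{a,a'} = \sum_{a'\subseteq\mathsf{Pk}} \big(\mathcal{S}[\![p]\!]^{n+1}\big)_{(a,b),(a',b')}. \]
   Context: $\mathsf{Pk}$ is a finite set of packets (records of finitely many fields with finitely many values); $[\varphi]$ is the Iverson bracket. ProbNetKAT programs are built from predicates $\mathsf{false},\mathsf{true}, f=n$, their negations/disjunctions/conjunctions, assignments $f\leftarrow n$, union $p\,\&\,q$, sequencing $p;q$, probabilistic choice $p\oplus_r q$ and iteration $p^*$. $p^{(0)}=\mathsf{true}$, $p^{(n+1)}=\mathsf{true}\,\&\,(p;p^{(n)})$. The matrix semantics $\mathcal{B}[\![p]\!]\in[0,1]^{2^{\mathsf{Pk}}\times 2^{\mathsf{Pk}}}$: $\mathcal{B}[\![\mathsf{false}]\!]_{ab}=[b=\emptyset]$; $\mathcal{B}[\![\mathsf{true}]\!]_{ab}=[a=b]$; $\mathcal{B}[\![f=n]\!]_{ab}=[b=\{\pi\in a:\pi.f=n\}]$; $\mathcal{B}[\![\neg t]\!]_{ab}=[b\subseteq a]\mathcal{B}[\![t]\!]_{a,a-b}$; $\mathcal{B}[\![f\leftarrow n]\!]_{ab}=[b=\{\pi[f:=n]:\pi\in a\}]$; $\mathcal{B}[\![p\,\&\,q]\!]_{ab}=\sum_{c,d}[c\cup d=b]\mathcal{B}[\![p]\!]_{ac}\mathcal{B}[\![q]\!]_{ad}$;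 $\mathcal{B}[\![p;q]\!]=\mathcal{B}[\![p]\!]\mathcal{B}[\![q]\!]$; $\mathcal{B}[\![p\oplus_r q]\!]=r\mathcal{B}[\![p]\!]+(1-r)\mathcal{B}[\![q]\!]$; $\mathcal{B}[\![p^*]\!]_{ab}=\lim_n\mathcal{B}[\![p^{(n)}]\!]_{ab}$. The small-step matrix is $\mathcal{S}[\![p]\!]_{(a,b),(a',b')}=[b'=b\cup a]\,\mathcal{B}[\![p]\!]_{a,a'}$. *)

theory Defs
  imports Complex_Main
begin

text \<open>Packets are records: total functions from a finite set of fields 'f to a
finite set of values 'v.  Pk is the (finite) type of all such packets; subsets of
Pk are elements of type ('f \<Rightarrow> 'v) set, which is again a finite type.\<close>

type_synonym ('f,'v) pk = "'f \<Rightarrow> 'v"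

definition iv :: "bool \<Rightarrow> real" where "iv P = (if P then 1 else 0)"

datatype ('f,'v) pred =
    PFalse | PTrue | Test 'f 'v | Neg "('f,'v) pred"
  | Disj "('f,'v) pred" "('f,'v) pred" | Conj "('f,'v) pred" "('f,'v) pred"

datatype ('f,'v) prog =
    Pred "('f,'v) pred" | Assign 'f 'v
  | Union "('f,'v) prog" "('f,'v) prog"
  | Seq "('f,'v) prog" "('f,'v) prog"
  | Choice "('f,'v) prog" real "('f,'v) prog"
  | Star "('f,'v) prog"

definition mmult :: "('i::finite \<Rightarrow> 'i \<Rightarrow> real) \<Rightarrow> ('i \<Rightarrow> 'i \<Rightarrow> real) \<Rightarrow> 'i \<Rightarrow> 'i \<Rightarrow> real" where
  "mmult M N i j = (\<Sum>k\<in>UNIV. M i k * N k j)"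

definition mid :: "'i \<Rightarrow> 'i \<Rightarrow> real" where
  "mid i j = iv (i = j)"

primrec mpow :: "('i::finite \<Rightarrow> 'i \<Rightarrow> real) \<Rightarrow> nat \<Rightarrow> 'i \<Rightarrow> 'i \<Rightarrow> real" where
  "mpow M 0 = mid"
| "mpow M (Suc n) = mmult (mpow M n) M"

definition munion :: "(('f::finite,'v::finite) pk set \<Rightarrow> ('f,'v) pk set \<Rightarrow> real)
   \<Rightarrow> (('f,'v) pk set \<Rightarrow> ('f,'v) pk set \<Rightarrow> real) \<Rightarrow> ('f,'v) pk set \<Rightarrow> ('f,'v) pk set \<Rightarrow> real" where
  "munion M N a b = (\<Sum>c\<in>UNIV. \<Sum>d\<in>UNIV. iv (c \<union> d = b) * M a c * N a d)"

primrec Bpred :: "('f::finite,'v::finite) pred \<Rightarrow> ('f,'v) pk set \<Rightarrow> ('f,'v) pk set \<Rightarrow> real" where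
  "Bpred PFalse a b = iv (b = {})"
| "Bpred PTrue a b = iv (a = b)"
| "Bpred (Test f n) a b = iv (b = {\<pi>\<in>a. \<pi> f = n})"
| "Bpred (Neg t) a b = iv (b \<subseteq> a) * Bpred t a (a - b)"
| "Bpred (Disj t u) a b = munion (Bpred t) (Bpred u) a b"
| "Bpred (Conj t u) a b = mmult (Bpred t) (Bpred u) a b"

primrec Biter :: "(('f::finite,'v::finite) pk set \<Rightarrow> ('f,'v) pk set \<Rightarrow> real) \<Rightarrow> nat
   \<Rightarrow> ('f,'v) pk set \<Rightarrow> ('f,'v) pk set \<Rightarrow> real" where
  "Biter M 0 = mid"
| "Biter M (Suc n) = munion mid (mmult M (Biter M n))"

primrec B :: "('f::finite,'v::finite) prog \<Rightarrow> ('f,'v) pk set \<Rightarrow> ('f,'v) pk set \<Rightarrow> real" where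
  "B (Pred t) = Bpred t"
| "B (Assign f n) = (\<lambda>a b. iv (b = (\<lambda>\<pi>. \<pi>(f := n)) ` a))"
| "B (Union p q) = munion (B p) (B q)"
| "B (Seq p q) = mmult (B p) (B q)"
| "B (Choice p r q) = (\<lambda>a b. r * B p a b + (1 - r) * B q a b)"
| "B (Star p) = (\<lambda>a b. lim (\<lambda>n. Biter (B p) n a b))"

primrec piter :: "('f,'v) prog \<Rightarrow> nat \<Rightarrow> ('f,'v) prog" where
  "piter p 0 = Pred PTrue"
| "piter p (Suc n) = Union (Pred PTrue) (Seq p (piter p n))"

primrec wf_prog :: "('f,'v) prog \<Rightarrow> bool" where
  "wf_prog (Pred t) = True"
| "wf_prog (Assign f n) = True"
| "wf_prog (Union p q) = (wf_prog p \<and> wf_prog q)"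
| "wf_prog (Seq p q) = (wf_prog p \<and> wf_prog q)"
| "wf_prog (Choice p r q) = (0 \<le> r \<and> r \<le> 1 \<and> wf_prog p \<and> wf_prog q)"
| "wf_prog (Star p) = wf_prog p"

definition S :: "('f::finite,'v::finite) prog \<Rightarrow> (('f,'v) pk set \<times> ('f,'v) pk set)
   \<Rightarrow> (('f,'v) pk set \<times> ('f,'v) pk set) \<Rightarrow> real" where
  "S p ab ab' = iv (snd ab' = snd ab \<union> fst ab) * B p (fst ab) (fst ab')"

end

theory Submission
  imports Defs
begin

lemma iv_mult: "iv P * y = (if P then y else 0)"
  by (simp add: iv_def)

lemma iv_nonneg: "0 \<le> iv P" by (simp add: iv_def)
lemma iv_le1: "iv P \<le> 1" by (simp add: iv_def)

lemma mult_iv: "y * iv P = (if P then y else 0)"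
  by (simp add: iv_def)

lemma sum_iv_eq: "(\<Sum>b\<in>UNIV. iv (b = x) * f b) = f (x::'a::finite)"
  by (simp add: iv_mult)

lemma sum_iv_eq': "(\<Sum>b\<in>UNIV. iv (x = b) * f b) = f (x::'a::finite)"
  by (simp add: iv_mult)

lemma mmult_assoc: "mmult (mmult M N) P = mmult M (mmult N P)"
proof (rule ext, rule ext)
  fix i j
  have "mmult (mmult M N) P i j = (\<Sum>k\<in>UNIV. \<Sum>l\<in>UNIV. M i l * N l k * P k j)"
    by (simp add: mmult_def sum_distrib_right)
  also have "\<dots> = (\<Sum>l\<in>UNIV. \<Sum>k\<in>UNIV. M i l * N l k * P k j)"
    by (rule sum.swap)
  also have "\<dots> = mmult M (mmult N P) i j"
    by (simp add: mmult_def sum_distrib_left mult.assoc)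
  finally show "mmult (mmult M N) P i j = mmult M (mmult N P) i j" .
qed

lemma mmult_mid_left: "mmult mid M = M"
  by (rule ext)+ (simp add: mmult_def mid_def sum_iv_eq')

lemma mmult_mid_right: "mmult M mid = M"
  by (rule ext)+ (simp add: mmult_def mid_def mult_iv)

lemma mpow_Suc': "mpow M (Suc n) = mmult M (mpow M n)"
  by (induction n) (simp_all add: mmult_mid_left mmult_mid_right mmult_assoc)

definition stoch :: "('i::finite \<Rightarrow> 'i \<Rightarrow> real) \<Rightarrow> bool" where
  "stoch M \<longleftrightarrow> (\<forall>a b. 0 \<le> M a b) \<and> (\<forall>a. (\<Sum>b\<in>UNIV. M a b) = 1)"

lemma stoch_mid: "stoch mid"
  by (simp add: stoch_def mid_def iv_nonneg iv_def)

lemma stoch_mmult: assumes "stoch M" "stoch N" shows "stoch (mmult M N)"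
proof -
  have nn: "0 \<le> mmult M N a b" for a b
    using assms unfolding stoch_def mmult_def by (blast intro: sum_nonneg mult_nonneg_nonneg)
  have "(\<Sum>b\<in>UNIV. mmult M N a b) = 1" for a
  proof -
    have "(\<Sum>b\<in>UNIV. mmult M N a b) = (\<Sum>k\<in>UNIV. M a k * (\<Sum>b\<in>UNIV. N k b))"
      unfolding mmult_def by (subst sum.swap) (simp add: sum_distrib_left)
    also have "\<dots> = 1" using assms by (simp add: stoch_def)
    finally show ?thesis .
  qed
  with nn show ?thesis by (simp add: stoch_def)
qed

lemma stoch_munion: assumes "stoch M" "stoch N" shows "stoch (munion M N)"
proof -
  have nn: "0 \<le> munion M N a b" for a b
    using assms unfolding stoch_def munion_def by (blast intro: sum_nonneg mult_nonneg_nonneg iv_nonneg)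
  have "(\<Sum>b\<in>UNIV. munion M N a b) = 1" for a
  proof -
    have "(\<Sum>b\<in>UNIV. munion M N a b) = (\<Sum>c\<in>UNIV. \<Sum>b\<in>UNIV. \<Sum>d\<in>UNIV. iv (c \<union> d = b) * (M a c * N a d))"
      unfolding munion_def by (subst sum.swap) (simp add: mult.assoc)
    also have "\<dots> = (\<Sum>c\<in>UNIV. \<Sum>d\<in>UNIV. \<Sum>b\<in>UNIV. iv (c \<union> d = b) * (M a c * N a d))"
      by (rule sum.cong[OF refl], rule sum.swap)
    also have "\<dots> = (\<Sum>c\<in>UNIV. M a c * (\<Sum>d\<in>UNIV. N a d))"
      by (simp add: sum_iv_eq' sum_distrib_left)
    also have "\<dots> = 1" using assms by (simp add: stoch_def)
    finally show ?thesis .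
  qed
  with nn show ?thesis by (simp add: stoch_def)
qed


lemma sum_iv1: "(\<Sum>b\<in>(UNIV::'a::finite set). iv (b = x)) = 1"
  by (simp add: iv_def)

lemma Bpred_det:
  "\<exists>f. (\<forall>a. f a \<subseteq> a) \<and> (\<forall>a b. Bpred t a b = iv (b = f a))"
proof (induction t)
  case PFalse
  show ?case by (rule exI[of _ "\<lambda>a. {}"]) simp
next
  case PTrue
  show ?case by (rule exI[of _ "\<lambda>a. a"]) (auto simp: iv_def)
next
  case (Test f n)
  show ?case by (rule exI[of _ "\<lambda>a. {\<pi>\<in>a. \<pi> f = n}"]) auto
next
  case (Neg t)
  then obtain f where f: "\<forall>a. f a \<subseteq> a" "\<forall>a b. Bpred t a b = iv (b = f a)" by blast
  have "Bpred (Neg t) a b = iv (b = a - f a)" for a b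
    using f(1)[rule_format, of a] by (auto simp: f(2) iv_def)
  then show ?case by (intro exI[of _ "\<lambda>a. a - f a"]) auto
next
  case (Disj t u)
  then obtain f g where f: "\<forall>a. f a \<subseteq> a" "\<forall>a b. Bpred t a b = iv (b = f a)"
    and g: "\<forall>a. g a \<subseteq> a" "\<forall>a b. Bpred u a b = iv (b = g a)" by blast
  have "Bpred (Disj t u) a b = iv (b = f a \<union> g a)" for a b
  proof -
    have "Bpred (Disj t u) a b = (\<Sum>c\<in>UNIV. \<Sum>d\<in>UNIV. iv (c = f a) * (iv (d = g a) * iv (c \<union> d = b)))"
      by (simp add: munion_def f(2) g(2) mult_ac)
    also have "\<dots> = (\<Sum>c\<in>UNIV. iv (c = f a) * (\<Sum>d\<in>UNIV. iv (d = g a) * iv (c \<union> d = b)))"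
      by (simp add: sum_distrib_left)
    also have "\<dots> = iv (f a \<union> g a = b)"
      by (simp only: sum_iv_eq)
    finally show ?thesis by (auto simp: iv_def)
  qed
  then show ?case using f(1) g(1) by (intro exI[of _ "\<lambda>a. f a \<union> g a"]) auto
next
  case (Conj t u)
  then obtain f g where f: "\<forall>a. f a \<subseteq> a" "\<forall>a b. Bpred t a b = iv (b = f a)"
    and g: "\<forall>a. g a \<subseteq> a" "\<forall>a b. Bpred u a b = iv (b = g a)" by blast
  have "Bpred (Conj t u) a b = iv (b = g (f a))" for a b
    by (simp add: mmult_def f(2) g(2) sum_iv_eq)
  then show ?case using f(1) g(1) by (intro exI[of _ "\<lambda>a. g (f a)"]) blast
qed

lemma stoch_Bpred: "stoch (Bpred t)"
proof -
  obtain f where f: "\<forall>a b. Bpred t a b = iv (b = f a)" using Bpred_det by blast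
  then have "Bpred t = (\<lambda>a b. iv (b = f a))" by (intro ext) simp
  then show ?thesis unfolding stoch_def by (simp add: iv_nonneg sum_iv1)
qed


lemma stoch_Biter: "stoch M \<Longrightarrow> stoch (Biter M n)"
  by (induction n) (simp_all add: stoch_mid stoch_munion stoch_mmult)

lemma Biter_Suc_val:
  "Biter M (Suc n) a b = (\<Sum>d\<in>UNIV. iv (a \<union> d = b) * mmult M (Biter M n) a d)"
proof -
  have "Biter M (Suc n) a b = (\<Sum>c\<in>UNIV. iv (a = c) * (\<Sum>d\<in>UNIV. iv (c \<union> d = b) * mmult M (Biter M n) a d))"
    by (simp add: munion_def mid_def sum_distrib_left mult_ac)
  also have "\<dots> = (\<Sum>d\<in>UNIV. iv (a \<union> d = b) * mmult M (Biter M n) a d)"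
    by (simp only: sum_iv_eq')
  finally show ?thesis .
qed

definition Fc :: "(('f::finite,'v::finite) pk set \<Rightarrow> ('f,'v) pk set \<Rightarrow> real) \<Rightarrow> nat
   \<Rightarrow> ('f,'v) pk set \<Rightarrow> ('f,'v) pk set \<Rightarrow> real" where
  "Fc M n a c = (\<Sum>b\<in>UNIV. iv (b \<subseteq> c) * Biter M n a b)"

lemma Fc_0: "Fc M 0 a c = iv (a \<subseteq> c)"
  by (simp add: Fc_def mid_def mult_iv)

lemma Fc_Suc: "Fc M (Suc n) a c = iv (a \<subseteq> c) * (\<Sum>e\<in>UNIV. M a e * Fc M n e c)"
proof -
  have "Fc M (Suc n) a c = (\<Sum>b\<in>UNIV. \<Sum>d\<in>UNIV. iv (b \<subseteq> c) * (iv (a \<union> d = b) * mmult M (Biter M n) a d))"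
    by (simp only: Fc_def Biter_Suc_val sum_distrib_left)
  also have "\<dots> = (\<Sum>d\<in>UNIV. \<Sum>b\<in>UNIV. iv (a \<union> d = b) * (iv (b \<subseteq> c) * mmult M (Biter M n) a d))"
    by (subst sum.swap) (simp add: mult_ac)
  also have "\<dots> = (\<Sum>d\<in>UNIV. iv (a \<union> d \<subseteq> c) * mmult M (Biter M n) a d)"
    by (simp only: sum_iv_eq')
  also have "\<dots> = (\<Sum>d\<in>UNIV. iv (a \<subseteq> c) * (iv (d \<subseteq> c) * mmult M (Biter M n) a d))"
    by (intro sum.cong refl) (simp add: iv_def)
  also have "\<dots> = iv (a \<subseteq> c) * (\<Sum>d\<in>UNIV. \<Sum>e\<in>UNIV. M a e * (iv (d \<subseteq> c) * Biter M n e d))"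
    by (simp add: sum_distrib_left mmult_def mult_ac)
  also have "\<dots> = iv (a \<subseteq> c) * (\<Sum>e\<in>UNIV. \<Sum>d\<in>UNIV. M a e * (iv (d \<subseteq> c) * Biter M n e d))"
    by (subst sum.swap) (rule refl)
  also have "\<dots> = iv (a \<subseteq> c) * (\<Sum>e\<in>UNIV. M a e * Fc M n e c)"
    by (simp add: Fc_def sum_distrib_left)
  finally show ?thesis .
qed

lemma Fc_nonneg: "stoch M \<Longrightarrow> 0 \<le> Fc M n a c"
  using stoch_Biter[of M n] unfolding Fc_def stoch_def
  by (blast intro: sum_nonneg mult_nonneg_nonneg iv_nonneg)

lemma Fc_le1: "stoch M \<Longrightarrow> Fc M n a c \<le> 1"
proof -
  assume M: "stoch M"
  then have "Fc M n a c \<le> (\<Sum>b\<in>UNIV. Biter M n a b)"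
    using stoch_Biter[OF M, of n] unfolding Fc_def stoch_def
    by (intro sum_mono) (simp add: iv_def)
  also have "\<dots> = 1" using stoch_Biter[OF M, of n] by (simp add: stoch_def)
  finally show ?thesis .
qed

lemma Fc_dec: assumes M: "stoch M" shows "Fc M (Suc n) a c \<le> Fc M n a c"
proof (induction n arbitrary: a)
  case 0
  have "(\<Sum>e\<in>UNIV. M a e * Fc M 0 e c) \<le> (\<Sum>e\<in>UNIV. M a e)"
    using M unfolding stoch_def
    by (intro sum_mono) (simp add: Fc_0 mult_iv)
  also have "\<dots> = 1" using M by (simp add: stoch_def)
  finally show ?case
    by (simp add: Fc_Suc[of M 0] Fc_0 iv_def)
next
  case (Suc n)
  have "(\<Sum>e\<in>UNIV. M a e * Fc M (Suc n) e c) \<le> (\<Sum>e\<in>UNIV. M a e * Fc M n e c)"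
    using M Suc unfolding stoch_def
    by (intro sum_mono mult_left_mono) auto
  then show ?case
    by (simp only: Fc_Suc[of M "Suc n"] Fc_Suc[of M n]) (intro mult_left_mono iv_nonneg)
qed

lemma Fc_conv: assumes M: "stoch M" shows "convergent (\<lambda>n. Fc M n a c)"
proof -
  have dec: "decseq (\<lambda>n. Fc M n a c)"
    by (rule decseq_SucI) (rule Fc_dec[OF M])
  have nn: "\<forall>i. 0 \<le> Fc M i a c" using Fc_nonneg[OF M] by blast
  obtain L where "(\<lambda>n. Fc M n a c) \<longlonglongrightarrow> L"
    using decseq_convergent[OF dec nn] by blast
  then show ?thesis by (auto simp: convergent_def)
qed

lemma Biter_conv: assumes M: "stoch M" shows "convergent (\<lambda>n. Biter M n a b)"
proof -
  have "finite b" by simp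
  then show ?thesis
  proof (induction b rule: finite_psubset_induct)
    case (psubset b)
    have eq: "Biter M n a b = Fc M n a b - (\<Sum>c\<in>{c. c \<subset> b}. Biter M n a c)" for n
    proof -
      have "Fc M n a b = (\<Sum>c\<in>{c. c \<subseteq> b}. Biter M n a c)"
        unfolding Fc_def by (simp add: iv_mult sum.If_cases)
      also have "{c. c \<subseteq> b} = insert b {c. c \<subset> b}" by auto
      also have "(\<Sum>c\<in>insert b {c. c \<subset> b}. Biter M n a c) = Biter M n a b + (\<Sum>c\<in>{c. c \<subset> b}. Biter M n a c)"
        by (subst sum.insert) auto
      finally show ?thesis by simp
    qed
    show ?case unfolding eq
      by (intro convergent_diff Fc_conv[OF M] convergent_sum psubset.IH) simp
  qed
qed

lemma stoch_lim: assumes M: "stoch M" shows "stoch (\<lambda>a b. lim (\<lambda>n. Biter M n a b))"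
proof -
  have L: "(\<lambda>n. Biter M n a b) \<longlonglongrightarrow> lim (\<lambda>n. Biter M n a b)" for a b
    using Biter_conv[OF M] by (simp add: convergent_LIMSEQ_iff)
  have nn: "0 \<le> lim (\<lambda>n. Biter M n a b)" for a b
    using stoch_Biter[OF M] unfolding stoch_def
    by (intro LIMSEQ_le_const[OF L]) auto
  have "(\<lambda>n. \<Sum>b\<in>UNIV. Biter M n a b) \<longlonglongrightarrow> (\<Sum>b\<in>UNIV. lim (\<lambda>n. Biter M n a b))" for a
    by (intro tendsto_sum L)
  moreover have "(\<lambda>n. \<Sum>b\<in>UNIV. Biter M n a b) = (\<lambda>n. 1)" for a
    using stoch_Biter[OF M] by (simp add: stoch_def)
  ultimately have "(\<Sum>b\<in>UNIV. lim (\<lambda>n. Biter M n a b)) = 1" for a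
    by (metis LIMSEQ_const_iff)
  with nn show ?thesis by (simp add: stoch_def)
qed

lemma stoch_B: "wf_prog p \<Longrightarrow> stoch (B p)"
proof (induction p)
  case (Choice p r q)
  then have r: "0 \<le> r" "r \<le> 1" and sp: "stoch (B p)" and sq: "stoch (B q)" by auto
  have "0 \<le> r * B p a b + (1 - r) * B q a b" for a b
    using r sp sq unfolding stoch_def by (intro add_nonneg_nonneg mult_nonneg_nonneg) auto
  moreover have "(\<Sum>b\<in>UNIV. r * B p a b + (1 - r) * B q a b) = 1" for a
    using sp sq by (simp add: sum.distrib sum_distrib_left[symmetric] stoch_def)
  ultimately show ?case by (simp add: stoch_def)
next
  case (Assign f n)
  show ?case by (simp add: stoch_def sum_iv1 iv_nonneg)
qed (simp_all add: stoch_Bpred stoch_munion stoch_mmult stoch_lim)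


lemma munion_mid: "munion mid Y a b = (\<Sum>d\<in>UNIV. iv (a \<union> d = b) * Y a d)"
proof -
  have "munion mid Y a b = (\<Sum>c\<in>UNIV. iv (a = c) * (\<Sum>d\<in>UNIV. iv (c \<union> d = b) * Y a d))"
    by (simp add: munion_def mid_def sum_distrib_left mult_ac)
  also have "\<dots> = (\<Sum>d\<in>UNIV. iv (a \<union> d = b) * Y a d)"
    by (simp only: sum_iv_eq')
  finally show ?thesis .
qed

lemma Bpred_PTrue: "Bpred PTrue = mid"
  by (intro ext) (simp add: mid_def)

lemma sum_pair_UNIV: "(\<Sum>k\<in>(UNIV::('a::finite \<times> 'b::finite) set). f k) = (\<Sum>x\<in>UNIV. \<Sum>y\<in>UNIV. f (x, y))"
  by (simp add: sum.cartesian_product UNIV_Times_UNIV[symmetric] del: UNIV_Times_UNIV)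

lemma main_ind:
  fixes p :: "('f::finite, 'v::finite) prog" and b' :: "('f,'v) pk set"
  assumes sp: "stoch (B p)"
  shows "\<forall>a b. (\<Sum>a'\<in>UNIV. iv (b' = a' \<union> b) * B (piter p n) a a')
       = (\<Sum>a'\<in>UNIV. mpow (S p) (Suc n) (a, b) (a', b'))"
proof (induction n)
  case 0
  show ?case
  proof (intro allI)
    fix a b :: "('f,'v) pk set"
    have "(\<Sum>a'\<in>UNIV. iv (b' = a' \<union> b) * B (piter p 0) a a') = (\<Sum>a'\<in>UNIV. iv (a = a') * iv (b' = a' \<union> b))"
      by (simp add: mult.commute)
    also have "\<dots> = iv (b' = a \<union> b)" by (simp only: sum_iv_eq')
    also have "\<dots> = (\<Sum>a'\<in>UNIV. iv (b' = b \<union> a) * B p a a')"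
      using sp by (simp add: stoch_def sum_distrib_left[symmetric] Un_commute)
    also have "\<dots> = (\<Sum>a'\<in>UNIV. mpow (S p) (Suc 0) (a, b) (a', b'))"
      by (simp add: mmult_mid_left S_def)
    finally show "(\<Sum>a'\<in>UNIV. iv (b' = a' \<union> b) * B (piter p 0) a a') =
       (\<Sum>a'\<in>UNIV. mpow (S p) (Suc 0) (a, b) (a', b'))" .
  qed
next
  case (Suc n)
  show ?case
  proof (intro allI)
    fix a b :: "('f,'v) pk set"
    let ?Y = "mmult (B p) (B (piter p n))"
    let ?R = "\<lambda>x. (\<Sum>a'\<in>UNIV. mpow (S p) (Suc n) x (a', b'))"
    have "(\<Sum>a'\<in>UNIV. iv (b' = a' \<union> b) * B (piter p (Suc n)) a a')
        = (\<Sum>a'\<in>UNIV. \<Sum>d\<in>UNIV. iv (b' = a' \<union> b) * (iv (a \<union> d = a') * ?Y a d))"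
      by (simp add: Bpred_PTrue munion_mid sum_distrib_left)
    also have "\<dots> = (\<Sum>d\<in>UNIV. \<Sum>a'\<in>UNIV. iv (a \<union> d = a') * (iv (b' = a' \<union> b) * ?Y a d))"
      by (subst sum.swap) (simp add: mult_ac)
    also have "\<dots> = (\<Sum>d\<in>UNIV. iv (b' = a \<union> d \<union> b) * ?Y a d)"
      by (simp only: sum_iv_eq')
    also have "\<dots> = (\<Sum>d\<in>UNIV. \<Sum>e\<in>UNIV. B p a e * (iv (b' = d \<union> (b \<union> a)) * B (piter p n) e d))"
      by (simp add: mmult_def sum_distrib_left Un_ac mult_ac)
    also have "\<dots> = (\<Sum>e\<in>UNIV. \<Sum>d\<in>UNIV. B p a e * (iv (b' = d \<union> (b \<union> a)) * B (piter p n) e d))"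
      by (rule sum.swap)
    also have "\<dots> = (\<Sum>e\<in>UNIV. B p a e * ?R (e, b \<union> a))"
      using Suc.IH by (simp add: sum_distrib_left[symmetric])
    also have "\<dots> = (\<Sum>e\<in>UNIV. \<Sum>b1\<in>UNIV. iv (b1 = b \<union> a) * (B p a e * ?R (e, b1)))"
      by (simp only: sum_iv_eq)
    also have "\<dots> = (\<Sum>k\<in>UNIV. S p (a, b) k * ?R k)"
      by (simp add: sum_pair_UNIV S_def mult_ac)
    also have "\<dots> = (\<Sum>k\<in>UNIV. \<Sum>a'\<in>UNIV. S p (a, b) k * mpow (S p) (Suc n) k (a', b'))"
      by (simp add: sum_distrib_left)
    also have "\<dots> = (\<Sum>a'\<in>UNIV. \<Sum>k\<in>UNIV. S p (a, b) k * mpow (S p) (Suc n) k (a', b'))"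
      by (rule sum.swap)
    also have "\<dots> = (\<Sum>a'\<in>UNIV. mpow (S p) (Suc (Suc n)) (a, b) (a', b'))"
      by (simp only: mpow_Suc'[of _ "Suc n"] mmult_def)
    finally show "(\<Sum>a'\<in>UNIV. iv (b' = a' \<union> b) * B (piter p (Suc n)) a a') =
       (\<Sum>a'\<in>UNIV. mpow (S p) (Suc (Suc n)) (a, b) (a', b'))" .
  qed
qed

theorem lemma4p3:
  fixes p :: "('f::finite, 'v::finite) prog" and n :: nat
    and a b b' :: "('f,'v) pk set"
  assumes "wf_prog p"
  shows "(\<Sum>a'\<in>UNIV. iv (b' = a' \<union> b) * B (piter p n) a a')
       = (\<Sum>a'\<in>UNIV. mpow (S p) (n + 1) (a, b) (a', b'))"
  using main_ind[OF stoch_B[OF assms], of b' n] by simp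

end
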